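(* For $d\in(0,2]$ let $M(4,d)$ be the cardinality of the four-dimensional spherical code by Hopf foliations (SCHF) with minimum distance $d$, as defined in the context. Then the asymptotic center density of this family, $$\overline{\Delta}_c(\mathrm{SCHF}[4])=\lim_{d\to0}\frac{M(4,d)}{\mathbb{S}_4}\left(\frac d2\right)^{3},$$ equals $\dfrac{1}{4\sqrt3}$.
   Context: $\mathbb{S}_n=\frac{n\pi^{n/2}}{\Gamma(1+n/2)}$ is the surface area of the unit sphere $S^{n-1}\subset\mathbb{R}^n$ (so $\mathbb{S}_4=2\pi^2$). Four-dimensional SCHF: given $d\in(0,2]$, put $\Delta\eta=2\arcsin(d/2)$, $t=t(d)=\lfloor\pi/(4\arcsin(d/2))\rfloor$ and $\eta_i=\pi/4+i\Delta\eta$ for $i=0,1,\dots,\lfloor t/2\rfloor$. For $\eta\in(0,\pi/2]$ let $m(d,\eta)=\lfloor\pi/\arcsin(d/(2\cos\eta))\rfloor$ if $d\le2\cos\eta$ and $1$ otherwise; let $n(d,\eta)=\max(2\lfloor\min\{n_1,n_2\}/2\rfloor,1)$ with $n_1=\lfloor\pi/\arcsin[((d^2/4)\csc^2\eta-\cot^2\eta\sin^2(\pi/2m))^{1/2}]\rfloor$ (where $m=m(d,\eta)$), and $n_2=\lfloor2\pi/\arcsin(d/(2\sin\eta))\rfloor$ if $d\le 2\sin\eta$, $n_2=1$ otherwise. On the torus $T_{\eta_i}=S^1_{\cos\eta_i}\times S^1_{\sin\eta_i}\subset S^3$ the code consists of the $m_in_i$ points $(e^{\mathbf{i}(2\pi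 j/m_i+\pi k/m_i)}\cos\eta_i,\ e^{\mathbf{i}2\pi k/n_i}\sin\eta_i)\in\mathbb{C}^2\cong\mathbb{R}^4$, $0\le j<m_i$, $0\le k<n_i$, where $m_i=m(d,\eta_i)$, $n_i=n(d,\eta_i)$; the tori $\eta=\pi/4-i\Delta\eta$, $i\ge1$, carry the points obtained by swapping the two complex coordinates. Thus $M(4,d)=m_0n_0+2\sum_{i=1}^{\lfloor t/2\rfloor}m_in_i$. *)

theory Defs
  imports "HOL-Analysis.Analysis"
begin

definition sphere_area :: "nat \<Rightarrow> real" where
  "sphere_area n = real n * pi powr (real n / 2) / Gamma (1 + real n / 2)"

text \<open>Number of points per circle of radius cos eta (first factor).\<close>
definition schf_m :: "real \<Rightarrow> real \<Rightarrow> int" where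
  "schf_m d \<eta> = (if d \<le> 2 * cos \<eta> then \<lfloor>pi / arcsin (d / (2 * cos \<eta>))\<rfloor> else 1)"

definition schf_n1 :: "real \<Rightarrow> real \<Rightarrow> int" where
  "schf_n1 d \<eta> =
     \<lfloor>pi / arcsin (sqrt ((d^2 / 4) * (1 / sin \<eta>)^2
        - (cos \<eta> / sin \<eta>)^2 * (sin (pi / (2 * real_of_int (schf_m d \<eta>))))^2))\<rfloor>"

definition schf_n2 :: "real \<Rightarrow> real \<Rightarrow> int" where
  "schf_n2 d \<eta> = (if d \<le> 2 * sin \<eta> then \<lfloor>2 * pi / arcsin (d / (2 * sin \<eta>))\<rfloor> else 1)"

definition schf_n :: "real \<Rightarrow> real \<Rightarrow> int" where
  "schf_n d \<eta> = max (2 * (min (schf_n1 d \<eta>) (schf_n2 d \<eta>) div 2)) 1"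

definition schf_t :: "real \<Rightarrow> int" where
  "schf_t d = \<lfloor>pi / (4 * arcsin (d / 2))\<rfloor>"

definition schf_eta :: "real \<Rightarrow> nat \<Rightarrow> real" where
  "schf_eta d i = pi / 4 + real i * (2 * arcsin (d / 2))"

definition schf_M4 :: "real \<Rightarrow> int" where
  "schf_M4 d =
     schf_m d (schf_eta d 0) * schf_n d (schf_eta d 0)
     + 2 * (\<Sum>i\<in>{1..nat (schf_t d div 2)}. schf_m d (schf_eta d i) * schf_n d (schf_eta d i))"

end

theory Submission
  imports Defs
begin
lemma sphere_area_4: "sphere_area 4 = 2 * pi^2"
proof -
  have "Gamma (1 + real 4 / 2) = 2" using Gamma_numeral[of "num.Bit1 num.One"] by (simp add: numeral_3_eq_3 fact_numeral)
  then show ?thesis unfolding sphere_area_def by (simp add: powr_numeral)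
qed

lemma arcsin_bounds:
  fixes x :: real assumes "0 \<le> x" "x < 1"
  shows "x \<le> arcsin x" "arcsin x * (1 - x^2) \<le> x"
proof -
  define th where "th = arcsin x"
  have s: "sin th = x" using assms unfolding th_def by simp
  have th0: "0 \<le> th" using assms unfolding th_def by (simp add: arcsin_nonneg)
  have thl: "th < pi/2" using arcsin_less_arcsin[of x 1] assms unfolding th_def by simp
  show "x \<le> arcsin x" using sin_x_le_x[OF th0] s th_def by simp
  have c: "cos th = sqrt (1 - x^2)" using assms unfolding th_def by (simp add: cos_arcsin)
  have cpos: "cos th > 0" using th0 thl by (intro cos_gt_zero_pi) auto
  have "th \<le> tan th" using abs_tan_ge[of th] th0 thl
    by (smt (verit, best) cpos s assms(1) tan_def divide_nonneg_pos)
  then have "th * cos th \<le> x" using cpos s by (simp add: tan_def field_simps)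
  moreover have "1 - x^2 \<le> sqrt (1 - x^2)"
  proof -
    have "0 \<le> 1 - x^2" "1 - x^2 \<le> 1" using assms by (auto simp: power2_eq_square mult_le_one)
    then have "sqrt (1 - x^2) * sqrt (1 - x^2) \<le> sqrt (1 - x^2)"
      by (intro mult_left_le_one_le) auto
    then show ?thesis using \<open>0 \<le> 1 - x^2\<close> by simp
  qed
  ultimately show "arcsin x * (1 - x^2) \<le> x" using th0 c th_def
    by (smt (verit) mult_left_mono)
qed

lemma arcsin_ge: fixes x :: real assumes "0 \<le> x" "x \<le> 1" shows "x \<le> arcsin x"
proof (cases "x = 1")
  case True then show ?thesis using pi_gt3 by simp
next
  case False then show ?thesis using arcsin_bounds(1)[of x] assms by simp
qed

lemma floor_gt: "x - 1 < real_of_int \<lfloor>x\<rfloor>" by linarith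

lemma schf_m_crude:
  assumes d: "0 < d" and c: "0 \<le> cos eta"
  shows "1 \<le> schf_m d eta" "real_of_int (schf_m d eta) * d \<le> 2 * pi * cos eta + d"
proof -
  have "1 \<le> schf_m d eta \<and> real_of_int (schf_m d eta) * d \<le> 2 * pi * cos eta + d"
  proof (cases "d \<le> 2 * cos eta")
    case True
    define x where "x = d / (2 * cos eta)"
    have cp: "cos eta > 0" using True d by linarith
    have x0: "0 < x" "x \<le> 1" using True cp d unfolding x_def by (auto simp: field_simps)
    have th: "x \<le> arcsin x" "arcsin x \<le> pi/2" using arcsin_ge[of x] arcsin_ubound[of x] x0 by auto
    have thp: "arcsin x > 0" using th x0 by linarith
    have m: "schf_m d eta = \<lfloor>pi / arcsin x\<rfloor>" unfolding schf_m_def x_def using True by simp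
    have "2 \<le> pi / arcsin x" using th thp by (simp add: field_simps)
    then have m1: "1 \<le> schf_m d eta" unfolding m by linarith
    have "pi / arcsin x \<le> pi / x" using th x0 thp by (intro divide_left_mono) auto
    also have "\<dots> = 2 * pi * cos eta / d" unfolding x_def using cp d by (simp add: field_simps)
    finally have "real_of_int (schf_m d eta) \<le> 2 * pi * cos eta / d" unfolding m by linarith
    then have "real_of_int (schf_m d eta) * d \<le> 2 * pi * cos eta" using d by (simp add: field_simps)
    then show ?thesis using m1 d by linarith
  next
    case False
    then show ?thesis unfolding schf_m_def using d c by simp
  qed
  then show "1 \<le> schf_m d eta" "real_of_int (schf_m d eta) * d \<le> 2 * pi * cos eta + d" by auto
qed

lemma schf_n_le: "schf_n d eta \<le> max (schf_n2 d eta) 1" "schf_n d eta \<le> max (schf_n1 d eta) 1"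
  "1 \<le> schf_n d eta"
  unfolding schf_n_def by auto

lemma schf_n_crude:
  assumes d: "0 < d" and s: "0 < sin eta"
  shows "real_of_int (schf_n d eta) * d \<le> 4 * pi + d"
proof -
  have n2b: "real_of_int (schf_n2 d eta) * d \<le> 4 * pi * sin eta \<or> schf_n2 d eta = 1"
  proof (cases "d \<le> 2 * sin eta")
    case True
    define v where "v = d / (2 * sin eta)"
    have v0: "0 < v" "v \<le> 1" using True s d unfolding v_def by (auto simp: field_simps)
    have th: "v \<le> arcsin v" using arcsin_ge[of v] v0 by auto
    have n2: "schf_n2 d eta = \<lfloor>2 * pi / arcsin v\<rfloor>" unfolding schf_n2_def v_def using True by simp
    have "2 * pi / arcsin v \<le> 2 * pi / v" using th v0 by (intro divide_left_mono) auto
    also have "\<dots> = 4 * pi * sin eta / d" unfolding v_def using s d by (simp add: field_simps)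
    finally have "real_of_int (schf_n2 d eta) \<le> 4 * pi * sin eta / d" unfolding n2 by linarith
    then show ?thesis using d by (simp add: field_simps)
  next
    case False then show ?thesis unfolding schf_n2_def by simp
  qed
  have "real_of_int (max (schf_n2 d eta) 1) * d \<le> 4 * pi + d"
  proof (cases "schf_n2 d eta \<le> 1")
    case True then show ?thesis using d pi_gt3 by simp
  next
    case False
    then have "real_of_int (schf_n2 d eta) * d \<le> 4 * pi * sin eta" using n2b by auto
    moreover have "4 * pi * sin eta \<le> 4 * pi" using pi_gt3 by simp
    ultimately have "real_of_int (schf_n2 d eta) * d \<le> 4 * pi + d" using d by linarith
    then show ?thesis using False by (simp add: max_def)
  qed
  moreover have "real_of_int (schf_n d eta) * d \<le> real_of_int (max (schf_n2 d eta) 1) * d"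
    using schf_n_le(1)[of d eta] d by (intro mult_right_mono) auto
  ultimately show ?thesis by linarith
qed

definition kf :: "real \<Rightarrow> real" where
  "kf u = 1 / ((1 - u^2) * (1 - (u / (1 - u^2)) / 3))"

lemma sqrt3_bounds: "1 < sqrt 3" "sqrt 3 < 2"
proof -
  show "1 < sqrt 3" by simp
  show "sqrt 3 < 2" using real_sqrt_less_mono[of 3 "2^2"] by simp
qed

lemma sin_eta_bounds:
  assumes eta: "pi/4 \<le> eta" "eta \<le> pi/2"
  shows "0 < sin eta" "1/2 \<le> (sin eta)^2" "1/2 \<le> sin eta" "0 \<le> cos eta"
proof -
  show sp: "0 < sin eta" using eta pi_gt3 by (intro sin_gt_zero) auto
  show "0 \<le> cos eta" using eta by (intro cos_ge_zero) auto
  have "cos eta \<le> cos (pi/4)" using eta by (intro cos_monotone_0_pi_le) auto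
  then have "cos eta \<le> sqrt 2 / 2" by (simp add: cos_45)
  moreover have "0 \<le> cos eta" using eta by (intro cos_ge_zero) auto
  ultimately have "(cos eta)^2 \<le> (sqrt 2 / 2)^2" by (intro power_mono) auto
  then have "(cos eta)^2 \<le> 1/2" by (simp add: power_divide)
  then show s2: "1/2 \<le> (sin eta)^2" using sin_cos_squared_add[of eta] by linarith
  show "1/2 \<le> sin eta"
  proof (rule ccontr)
    assume "\<not> 1/2 \<le> sin eta"
    then have "(sin eta)^2 < (1/2)^2" using sp by (intro power_strict_mono) auto
    then show False using s2 by (simp add: power2_eq_square)
  qed
qed

lemma kf_bounds: assumes "0 \<le> u" "u \<le> 1/4" shows "1 \<le> kf u" "kf u \<le> 6/5"
proof -
  have "u^2 \<le> (1/4)^2" using assms by (intro power_mono) auto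
  then have u2: "u^2 \<le> 1/16" by (simp add: power_divide)
  have a: "15/16 \<le> 1 - u^2" "1 - u^2 \<le> 1" using u2 by auto
  define w where "w = u / (1 - u^2)"
  have w0: "0 \<le> w" using a assms unfolding w_def by auto
  have "w \<le> (1/4) / (15/16)" unfolding w_def using a assms by (intro frac_le) auto
  then have b: "41/45 \<le> 1 - w/3" "1 - w/3 \<le> 1" using w0 by auto
  have P1: "(15/16) * (41/45) \<le> (1 - u^2) * (1 - w/3)" using a b by (intro mult_mono) auto
  have P2: "(1 - u^2) * (1 - w/3) \<le> 1" using a b w0 by (intro mult_le_one) auto
  have kw: "kf u = 1 / ((1 - u^2) * (1 - w/3))" unfolding kf_def w_def by simp
  show "1 \<le> kf u" unfolding kw using P1 P2 by (simp add: field_simps)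
  show "kf u \<le> 6/5" unfolding kw using P1 P2 by (simp add: field_simps)
qed

lemma big_m:
  assumes d: "0 < d" and c: "0 < cos eta" and xu: "d / (2 * cos eta) \<le> u" and u: "u \<le> 1/4"
  defines "M \<equiv> real_of_int (schf_m d eta)"
  shows "2 * pi * cos eta * (1 - u^2) - d \<le> M * d" "M * d \<le> 2 * pi * cos eta" "1 \<le> M"
    "d / 4 \<le> cos eta * sin (pi / (2 * M))" "cos eta * sin (pi / (2 * M)) \<le> d * kf u / 4"
proof -
  define x where "x = d / (2 * cos eta)"
  have x0: "0 < x" "x \<le> u" using d c xu unfolding x_def by auto
  have u0: "0 < u" using x0 by linarith
  have "u^2 \<le> (1/4)^2" using u u0 by (intro power_mono) auto
  then have u2: "u^2 \<le> 1/16" by (simp add: power_divide)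
  have x1: "x < 1" using x0 u by linarith
  have dc: "d \<le> 2 * cos eta" using x1 c d unfolding x_def by (simp add: field_simps)
  have xx: "x^2 \<le> u^2" using x0 by (intro power_mono) auto
  define th where "th = arcsin x"
  have th1: "x \<le> th" "th * (1 - x^2) \<le> x" using arcsin_bounds[of x] x0 x1 unfolding th_def by auto
  have th2: "th \<le> pi/2" using arcsin_ubound[of x] x0 x1 unfolding th_def by auto
  have thp: "0 < th" using th1 x0 by linarith
  have sth: "sin th = x" using x0 x1 unfolding th_def by simp
  have th3: "th * (1 - u^2) \<le> x"
  proof -
    have "th * (1 - u^2) \<le> th * (1 - x^2)" using xx thp by (intro mult_left_mono) auto
    then show ?thesis using th1 by linarith
  qed
  define w where "w = u / (1 - u^2)"
  have uu: "15/16 \<le> 1 - u^2" using u2 by linarith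
  have thw: "th \<le> w" unfolding w_def using th3 uu x0 by (simp add: field_simps)
  have w0: "0 \<le> w" "w \<le> 4/15" unfolding w_def using u0 uu u
    by (auto simp: field_simps)
  have m: "schf_m d eta = \<lfloor>pi / th\<rfloor>" unfolding schf_m_def th_def x_def using dc by simp
  have M1: "M \<le> pi / th" "pi / th - 1 < M" unfolding M_def m by linarith+
  have "2 \<le> pi / th" using th2 thp by (simp add: field_simps)
  then show M2: "1 \<le> M" using M1 by linarith
  have "pi / th \<le> pi / x" using th1 x0 thp by (intro divide_left_mono) auto
  also have "\<dots> = 2 * pi * cos eta / d" unfolding x_def using c d by (simp add: field_simps)
  finally have "M \<le> 2 * pi * cos eta / d" using M1 by linarith
  then show "M * d \<le> 2 * pi * cos eta" using d by (simp add: field_simps)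
  have "2 * pi * cos eta * (1 - u^2) / d = pi * (1 - u^2) / x" unfolding x_def using c d by (simp add: field_simps)
  also have "\<dots> \<le> pi / th"
  proof -
    have h: "pi * th \<le> pi * x + pi * (th * u^2)" using mult_left_mono[OF th3, of pi] by (simp add: algebra_simps)
    then show ?thesis using thp x0 by (simp add: field_simps)
  qed
  finally have "2 * pi * cos eta * (1 - u^2) / d - 1 \<le> M" using M1 by linarith
  then show "2 * pi * cos eta * (1 - u^2) - d \<le> M * d" using d by (simp add: field_simps)
  define phi where "phi = pi / (2 * M)"
  have ph1: "th / 2 \<le> phi" unfolding phi_def using M1 M2 thp by (simp add: field_simps)
  have ph2: "phi \<le> pi / 2" unfolding phi_def using M2 by (simp add: field_simps)
  have "(pi - th) / th < M" using M1 thp by (simp add: field_simps)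
  then have "pi - th < M * th" using thp by (simp add: field_simps)
  then have h: "pi * pi < pi * th + M * (pi * th)" using mult_strict_left_mono[of "pi - th" "M * th" pi]
    by (simp add: algebra_simps)
  have ph3: "phi * (pi - th) < pi * th / 2" unfolding phi_def using M2 thp pi_gt3 h
    by (simp add: field_simps)
  have "pi * (1 - w/3) \<le> pi - th"
  proof -
    have "3 * w \<le> pi * w" using w0 pi_gt3 by (intro mult_right_mono) auto
    moreover have "pi * (1 - w/3) = pi - pi*w/3" by (simp add: algebra_simps)
    ultimately show ?thesis using thw by linarith
  qed
  then have "phi * (pi * (1 - w/3)) \<le> phi * (pi - th)" using ph1 thp by (intro mult_left_mono) auto
  then have "pi * (phi * (1 - w/3)) \<le> pi * (th / 2)" using ph3 by (simp add: algebra_simps)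
  then have ph5: "phi * (1 - w/3) \<le> th / 2" by (rule mult_left_le_imp_le[OF _ pi_gt_zero])
  have th4: "th \<le> x / (1 - u^2)" using th3 uu by (simp add: field_simps)
  have "phi * (1 - w/3) \<le> (x / (1 - u^2)) / 2"
    using order_trans[OF ph5 divide_right_mono[OF th4]] by simp
  moreover have w3: "0 < 1 - w/3" using w0 by linarith
  ultimately have "phi \<le> ((x / (1 - u^2)) / 2) / (1 - w/3)" by (simp only: pos_le_divide_eq)
  also have "\<dots> = x * kf u / 2" unfolding kf_def w_def[symmetric] using w3 uu by (simp add: field_simps)
  finally have ph4: "phi \<le> x * kf u / 2" .
  have "sin (th/2) \<le> sin phi" using ph1 ph2 thp by (intro sin_monotone_2pi_le) auto
  moreover have "sin th \<le> 2 * sin (th/2)"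
  proof -
    have "sin th = 2 * sin (th/2) * cos (th/2)" using sin_double[of "th/2"] by simp
    moreover have "0 \<le> sin (th/2)" using thp th2 pi_gt3 by (intro sin_ge_zero) auto
    ultimately show ?thesis using mult_left_mono[of "cos (th/2)" 1 "2 * sin (th/2)"] by simp
  qed
  ultimately have "x / 2 \<le> sin phi" using sth by linarith
  then have "cos eta * (x/2) \<le> cos eta * sin phi" using c by (intro mult_left_mono) auto
  then show "d / 4 \<le> cos eta * sin (pi / (2 * M))" unfolding phi_def[symmetric] x_def using c by (simp add: field_simps)
  have "sin phi \<le> phi" using sin_x_le_x[of phi] ph1 thp by linarith
  then have "cos eta * sin phi \<le> cos eta * (x * kf u / 2)" using ph4 c by (intro mult_left_mono) auto
  then show "cos eta * sin (pi / (2 * M)) \<le> d * kf u / 4" unfolding phi_def[symmetric] x_def using c by (simp add: field_simps)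
qed

lemma two_div2: "k - 1 \<le> 2 * ((k::int) div 2)" by presburger

lemma big_n:
  assumes d: "0 < d" "d \<le> 1/10" and eta: "pi/4 \<le> eta" "eta \<le> pi/2" and c: "0 < cos eta"
    and A1: "d/4 \<le> cos eta * sin (pi / (2 * real_of_int (schf_m d eta)))"
    and A2: "cos eta * sin (pi / (2 * real_of_int (schf_m d eta))) \<le> d * k / 4"
    and k: "1 \<le> k" "k \<le> 6/5"
  defines "N \<equiv> real_of_int (schf_n d eta)"
  shows "4 * pi * sin eta * (1 - d^2) / sqrt 3 - 2 * d \<le> N * d"
    "N * d \<le> 4 * pi * sin eta / sqrt (4 - k^2) + d"
proof -
  define s where "s = sin eta"
  have s: "0 < s" "1/2 \<le> s^2" "1/2 \<le> s" "s \<le> 1" using sin_eta_bounds[OF eta] unfolding s_def by auto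
  define A where "A = cos eta * sin (pi / (2 * real_of_int (schf_m d eta)))"
  define Y where "Y = (d^2/4) * (1 / s)^2 - (cos eta / s)^2 * (sin (pi / (2 * real_of_int (schf_m d eta))))^2"
  have YA: "Y = (d^2/4 - A^2) / s^2" unfolding Y_def A_def using s
    by (simp add: power_divide power_mult_distrib field_simps)
  have A0: "0 \<le> A" using A1 d unfolding A_def by linarith
  have "(d/4)^2 \<le> A^2" using A1 d unfolding A_def by (intro power_mono) auto
  then have Al: "d^2/16 \<le> A^2" by (simp add: power_divide)
  have "A^2 \<le> (d*k/4)^2" using A2 A0 unfolding A_def by (intro power_mono) auto
  then have Au: "A^2 \<le> k^2 * (d^2/16)" by (simp add: power_divide power_mult_distrib algebra_simps)
  define q where "q = d / (4 * s)"
  have q0: "0 < q" unfolding q_def using d s by auto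
  have qq: "q^2 = (d^2/16) / s^2" unfolding q_def by (simp add: power_divide power_mult_distrib)
  have "Y \<le> (3 * (d^2/16)) / s^2" unfolding YA using Al s by (intro divide_right_mono) auto
  then have Yu: "Y \<le> 3 * q^2" unfolding qq by simp
  have "(4 - k^2) * (d^2/16) = d^2/4 - k^2 * (d^2/16)" by (simp add: field_simps)
  then have "(4 - k^2) * (d^2/16) \<le> d^2/4 - A^2" using Au by linarith
  then have "((4 - k^2) * (d^2/16)) / s^2 \<le> Y" unfolding YA using s by (intro divide_right_mono) auto
  then have Yl: "(4 - k^2) * q^2 \<le> Y" unfolding qq by simp
  have "1^2 \<le> k^2" "k^2 \<le> (6/5)^2" using k by (intro power_mono; simp)+
  then have k2: "1 \<le> k^2" "k^2 \<le> 36/25" by (simp_all add: power_divide)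
  have k4: "0 < 4 - k^2" using k2 by linarith
  define y where "y = sqrt Y"
  have yu: "y \<le> sqrt 3 * q" unfolding y_def using real_sqrt_le_mono[OF Yu] q0 by (simp add: real_sqrt_mult)
  have yl: "sqrt (4 - k^2) * q \<le> y" unfolding y_def using real_sqrt_le_mono[OF Yl] q0 by (simp add: real_sqrt_mult)
  have y0: "0 < y" using yl q0 k4 by (smt (verit) mult_pos_pos real_sqrt_gt_zero)
  have "sqrt 3 * q \<le> 2 * q" using sqrt3_bounds q0 by (intro mult_right_mono) auto
  moreover have "2 * q \<le> d" unfolding q_def using s d by (simp add: field_simps)
  ultimately have yd: "y \<le> d" using yu by linarith
  have y1: "y < 1" using yd d by linarith
  define a where "a = arcsin y"
  have a1: "y \<le> a" "a * (1 - y^2) \<le> y" using arcsin_bounds[of y] y0 y1 unfolding a_def by auto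
  have a0: "0 < a" using a1 y0 by linarith
  have n1: "schf_n1 d eta = \<lfloor>pi / a\<rfloor>" unfolding schf_n1_def a_def y_def Y_def s_def by simp
  define N1 where "N1 = real_of_int (schf_n1 d eta)"
  have N1: "N1 \<le> pi / a" "pi / a - 1 < N1" unfolding N1_def n1 by linarith+
  have "pi / a \<le> pi / y" using a1 y0 by (intro divide_left_mono) auto
  also have "\<dots> \<le> pi / (sqrt (4 - k^2) * q)"
  proof -
    have sq0: "0 < sqrt (4 - k^2) * q" using q0 k4 by simp
    then have "0 < y * (sqrt (4 - k^2) * q)" using y0 by simp
    then show ?thesis using yl sq0 by (intro divide_left_mono) auto
  qed
  also have "\<dots> = 4 * pi * s / (sqrt (4 - k^2)) / d" unfolding q_def using d s k4 by (simp add: field_simps)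
  finally have "N1 \<le> 4 * pi * s / (sqrt (4 - k^2)) / d" using N1 by linarith
  moreover have "0 < sqrt (4 - k^2)" using k4 by simp
  ultimately have N1u: "N1 * d \<le> 4 * pi * s / sqrt (4 - k^2)" using d by (simp add: field_simps)
  have yd2: "y^2 \<le> d^2" using yd y0 by (intro power_mono) auto
  have "d^2 \<le> (1/10)^2" using d by (intro power_mono) auto
  then have d2: "d^2 \<le> 1/100" by (simp add: power_divide)
  have "a * (1 - d^2) \<le> a * (1 - y^2)" using yd2 a0 by (intro mult_left_mono) auto
  then have "a * (1 - d^2) \<le> sqrt 3 * q" using a1 yu by linarith
  then have h: "pi * (a * (1 - d^2)) \<le> pi * (sqrt 3 * q)" by (intro mult_left_mono) auto
  have "pi * (1 - d^2) / (sqrt 3 * q) \<le> pi / a" using a0 q0 d2 h by (simp add: field_simps algebra_simps)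
  moreover have "pi * (1 - d^2) / (sqrt 3 * q) = 4 * pi * s * (1 - d^2) / sqrt 3 / d" unfolding q_def using s d by (simp add: field_simps)
  ultimately have "4 * pi * s * (1 - d^2) / sqrt 3 / d - 1 \<le> N1" using N1 by linarith
  then have N1l: "4 * pi * s * (1 - d^2) / sqrt 3 - d \<le> N1 * d" using d by (simp add: field_simps)
  define v where "v = d / (2 * s)"
  have v0: "0 < v" "v \<le> d" unfolding v_def using s d by (auto simp: field_simps)
  have ds: "d \<le> 2 * s" using s d by linarith
  define b where "b = arcsin v"
  have b1: "v \<le> b" "b * (1 - v^2) \<le> v" using arcsin_bounds[of v] v0 d unfolding b_def by auto
  have b0: "0 < b" using b1 v0 by linarith
  have n2: "schf_n2 d eta = \<lfloor>2 * pi / b\<rfloor>" unfolding schf_n2_def b_def v_def s_def using ds s_def by simp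
  define N2 where "N2 = real_of_int (schf_n2 d eta)"
  have N2: "2 * pi / b - 1 < N2" unfolding N2_def n2 by linarith
  have vd2: "v^2 \<le> d^2" using v0 by (intro power_mono) auto
  have "b * (1 - d^2) \<le> b * (1 - v^2)" using vd2 b0 by (intro mult_left_mono) auto
  then have "b * (1 - d^2) \<le> v" using b1 by linarith
  then have h2: "pi * (b * (1 - d^2)) \<le> pi * v" by (intro mult_left_mono) auto
  have "2 * pi * (1 - d^2) / v \<le> 2 * pi / b" using b0 v0 d2 h2 by (simp add: field_simps algebra_simps)
  moreover have "2 * pi * (1 - d^2) / v = 4 * pi * s * (1 - d^2) / d" unfolding v_def using s d by (simp add: field_simps)
  ultimately have "4 * pi * s * (1 - d^2) / d - 1 \<le> N2" using N2 by linarith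
  then have "4 * pi * s * (1 - d^2) - d \<le> N2 * d" using d by (simp add: field_simps)
  moreover have "4 * pi * s * (1 - d^2) / sqrt 3 \<le> 4 * pi * s * (1 - d^2)"
  proof -
    have X0: "0 \<le> 4 * pi * s * (1 - d^2)" using s d2 by simp
    then have "4 * pi * s * (1 - d^2) / sqrt 3 \<le> 4 * pi * s * (1 - d^2) / 1"
      using sqrt3_bounds by (intro divide_left_mono) auto
    then show ?thesis by simp
  qed
  ultimately have N2l: "4 * pi * s * (1 - d^2) / sqrt 3 - d \<le> N2 * d" by linarith
  have "schf_n1 d eta - 1 \<le> schf_n d eta \<and> schf_n2 d eta - 1 \<le> schf_n d eta \<or>
        min (schf_n1 d eta) (schf_n2 d eta) - 1 \<le> schf_n d eta"
    unfolding schf_n_def using two_div2[of "min (schf_n1 d eta) (schf_n2 d eta)"] by auto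
  then have "min N1 N2 - 1 \<le> N" unfolding N1_def N2_def N_def by (auto simp: min_def split: if_splits)
  then have "min N1 N2 * d \<le> (N + 1) * d" using d by (intro mult_right_mono) auto
  then have "min N1 N2 * d - d \<le> N * d" by (simp add: algebra_simps)
  moreover have "min N1 N2 * d = min (N1 * d) (N2 * d)" using d by (simp add: min_def)
  ultimately show "4 * pi * sin eta * (1 - d^2) / sqrt 3 - 2 * d \<le> N * d"
    using N1l N2l unfolding s_def by linarith
  have "N \<le> max N1 1" using schf_n_le(2)[of d eta] unfolding N_def N1_def by linarith
  then have "N * d \<le> max N1 1 * d" using d by (intro mult_right_mono) auto
  moreover have "max N1 1 * d = max (N1 * d) d" using d by (simp add: max_def)
  moreover have "0 \<le> 4 * pi * s / sqrt (4 - k^2)" using s k4 by simp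
  then have "max (N1 * d) d \<le> 4 * pi * s / sqrt (4 - k^2) + d" using N1u d(1) by (intro max.boundedI) linarith+
  ultimately show "N * d \<le> 4 * pi * sin eta / sqrt (4 - k^2) + d" using N1u unfolding s_def by linarith
qed

lemma term_big:
  assumes d: "0 < d" "d \<le> 1/10" and eta: "pi/4 \<le> eta" "eta \<le> pi/2" and c: "0 < cos eta"
    and xu: "d / (2 * cos eta) \<le> u" and u: "u \<le> 1/4"
  shows "real_of_int (schf_m d eta * schf_n d eta) * d^2 - 8 * pi^2 / sqrt 3 * (sin eta * cos eta)
           \<le> 8 * pi^2 * \<bar>1 / sqrt (4 - (kf u)^2) - 1 / sqrt 3\<bar> + 2 * pi * d"
    "- (8 * pi^2 / sqrt 3 * (1 - (1 - u^2) * (1 - d^2)) + 4 * pi * d + 4 * pi * d / sqrt 3)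
           \<le> real_of_int (schf_m d eta * schf_n d eta) * d^2 - 8 * pi^2 / sqrt 3 * (sin eta * cos eta)"
proof -
  define M where "M = real_of_int (schf_m d eta)"
  define N where "N = real_of_int (schf_n d eta)"
  define k where "k = kf u"
  define s where "s = sin eta"
  define cc where "cc = cos eta"
  have "0 < d / (2 * cos eta)" using d c by simp
  then have u0: "0 \<le> u" using xu by linarith
  have k: "1 \<le> k" "k \<le> 6/5" using kf_bounds[OF u0 u] unfolding k_def by auto
  note bm = big_m[OF d(1) c xu u]
  have Md: "2 * pi * cc * (1 - u^2) - d \<le> M * d" "M * d \<le> 2 * pi * cc" "1 \<le> M"
    using bm(1-3) unfolding M_def cc_def by auto
  note bn = big_n[OF d eta c bm(4) bm(5)[folded k_def] k]
  have Nd: "4 * pi * s * (1 - d^2) / sqrt 3 - 2 * d \<le> N * d" "N * d \<le> 4 * pi * s / sqrt (4 - k^2) + d"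
    using bn unfolding N_def s_def by auto
  have s: "0 < s" "1/2 \<le> s" "s \<le> 1" "0 \<le> cc" "cc \<le> 1" using sin_eta_bounds[OF eta] unfolding s_def cc_def by auto
  have N1: "1 \<le> N" using schf_n_le(3)[of d eta] unfolding N_def by simp
  have P: "real_of_int (schf_m d eta * schf_n d eta) * d^2 = (M * d) * (N * d)"
    unfolding M_def N_def by (simp add: power2_eq_square algebra_simps)
  define S where "S = s * cc"
  have S: "0 \<le> S" "S \<le> 1" unfolding S_def using s by (auto intro: mult_le_one)
  define G where "G = 8 * pi^2 / sqrt 3"
  have G0: "0 < G" unfolding G_def by simp
  have goalS: "8 * pi^2 / sqrt 3 * (sin eta * cos eta) = G * S" unfolding G_def S_def s_def cc_def by simp
  have Md0: "0 \<le> M * d" using Md(3) d by simp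
  have Nd0: "0 \<le> N * d" using N1 d by simp
  define R where "R = sqrt (4 - k^2)"
  have "(M * d) * (N * d) \<le> (2 * pi * cc) * (N * d)" using Md(2) Nd0 by (intro mult_right_mono)
  also have "\<dots> \<le> (2 * pi * cc) * (4 * pi * s / R + d)" using Nd(2) s unfolding R_def by (intro mult_left_mono) auto
  also have "\<dots> = G * S + 8 * pi^2 * (S * (1 / R - 1 / sqrt 3)) + 2 * pi * cc * d"
    unfolding G_def S_def by (simp add: algebra_simps power2_eq_square)
  also have "\<dots> \<le> G * S + 8 * pi^2 * \<bar>1 / R - 1 / sqrt 3\<bar> + 2 * pi * d"
  proof -
    have "S * (1 / R - 1 / sqrt 3) \<le> S * \<bar>1 / R - 1 / sqrt 3\<bar>" using S by (intro mult_left_mono) auto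
    also have "\<dots> \<le> 1 * \<bar>1 / R - 1 / sqrt 3\<bar>" using S by (intro mult_right_mono) auto
    finally have "8 * pi^2 * (S * (1 / R - 1 / sqrt 3)) \<le> 8 * pi^2 * \<bar>1 / R - 1 / sqrt 3\<bar>" by simp
    moreover have "2 * pi * cc * d \<le> 2 * pi * d" using s d by (simp add: mult_le_cancel_left1)
    ultimately show ?thesis by linarith
  qed
  finally show "real_of_int (schf_m d eta * schf_n d eta) * d^2 - 8 * pi^2 / sqrt 3 * (sin eta * cos eta)
           \<le> 8 * pi^2 * \<bar>1 / sqrt (4 - (kf u)^2) - 1 / sqrt 3\<bar> + 2 * pi * d"
    unfolding P goalS R_def k_def by linarith
  define NL where "NL = 4 * pi * s * (1 - d^2) / sqrt 3"
  define X where "X = 2 * pi * cc * (1 - u^2)"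
  have "u^2 \<le> (1/4)^2" using u u0 by (intro power_mono) auto
  then have u2: "u^2 \<le> 1/16" by (simp add: power_divide)
  have "d^2 \<le> (1/10)^2" using d by (intro power_mono) auto
  then have d2: "d^2 \<le> 1/100" by (simp add: power_divide)
  have NLb: "NL \<le> 4 * pi / sqrt 3" unfolding NL_def using s d2
    by (intro divide_right_mono) (auto intro!: mult_le_one simp: mult_le_cancel_left1)
  have NL2: "2 * d \<le> NL"
  proof -
    have "4 * pi * (1/2) * (99/100) / 2 \<le> NL" unfolding NL_def using s d2 sqrt3_bounds
      by (intro frac_le mult_mono) auto
    then show ?thesis using d pi_gt3 by linarith
  qed
  have X0: "0 \<le> X" "X \<le> 2 * pi" unfolding X_def using s u2 by (auto intro!: mult_le_one simp: mult_le_cancel_left1)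
  have "(M * d) * (N * d) \<ge> (M * d) * (NL - 2 * d)" using Nd(1) Md0 unfolding NL_def by (intro mult_left_mono) auto
  moreover have "(M * d) * (NL - 2 * d) \<ge> (X - d) * (NL - 2 * d)" using Md(1) NL2 unfolding X_def cc_def
    by (intro mult_right_mono) auto
  moreover have "(X - d) * (NL - 2 * d) = X * NL - 2 * d * X - d * NL + 2 * d^2" by (simp add: algebra_simps power2_eq_square)
  moreover have "2 * d * X \<le> 4 * pi * d" using X0 d by simp
  moreover have "d * NL \<le> 4 * pi * d / sqrt 3"
  proof -
    have "d * NL \<le> d * (4 * pi / sqrt 3)" using NLb d by (intro mult_left_mono) auto
    then show ?thesis by (simp add: mult.commute mult.left_commute)
  qed
  moreover have "X * NL = G * S * ((1 - u^2) * (1 - d^2))" unfolding X_def NL_def G_def S_def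
    by (simp add: field_simps power2_eq_square)
  moreover have "G * S * ((1 - u^2) * (1 - d^2)) - G * S \<ge> - G * (1 - (1 - u^2) * (1 - d^2))"
  proof -
    have "(1 - u^2) * (1 - d^2) \<le> 1" using u2 d2 by (intro mult_le_one) auto
    then have r: "0 \<le> 1 - (1 - u^2) * (1 - d^2)" by linarith
    have "S * (1 - (1 - u^2) * (1 - d^2)) \<le> 1 * (1 - (1 - u^2) * (1 - d^2))"
      using S r by (intro mult_right_mono) auto
    then have "G * (S * (1 - (1 - u^2) * (1 - d^2))) \<le> G * (1 - (1 - u^2) * (1 - d^2))"
      using G0 by (intro mult_left_mono) auto
    then have "G * S * (1 - (1 - u^2) * (1 - d^2)) \<le> G * (1 - (1 - u^2) * (1 - d^2))"
      by (simp add: mult.assoc)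
    then show ?thesis by (simp add: algebra_simps)
  qed
  moreover have "0 \<le> 2 * d^2" by simp
  moreover have "G * (sin eta * cos eta) = G * S" unfolding S_def s_def cc_def by simp
  ultimately show "- (8 * pi^2 / sqrt 3 * (1 - (1 - u^2) * (1 - d^2)) + 4 * pi * d + 4 * pi * d / sqrt 3)
           \<le> real_of_int (schf_m d eta * schf_n d eta) * d^2 - 8 * pi^2 / sqrt 3 * (sin eta * cos eta)"
    unfolding P G_def[symmetric] by linarith
qed

definition Gc :: real where "Gc = 8 * pi^2 / sqrt 3"
definition Bf :: "real \<Rightarrow> real \<Rightarrow> real" where
  "Bf del d = (2 * pi * del + d) * (4 * pi + d) + Gc * del"
definition E1f :: "real \<Rightarrow> real \<Rightarrow> real" where
  "E1f u d = 8 * pi^2 * \<bar>1 / sqrt (4 - (kf u)^2) - 1 / sqrt 3\<bar> + 2 * pi * d"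
definition E2f :: "real \<Rightarrow> real \<Rightarrow> real" where
  "E2f u d = 8 * pi^2 / sqrt 3 * (1 - (1 - u^2) * (1 - d^2)) + 4 * pi * d + 4 * pi * d / sqrt 3"
definition ef :: "real \<Rightarrow> real \<Rightarrow> real" where
  "ef del d = Bf del d + E1f (d / (2 * del)) d + E2f (d / (2 * del)) d"

lemma term_crude:
  assumes d: "0 < d" "d \<le> 1/10" and eta: "pi/4 \<le> eta" "eta \<le> pi/2" and cd: "cos eta \<le> del"
  shows "\<bar>real_of_int (schf_m d eta * schf_n d eta) * d^2 - Gc * (sin eta * cos eta)\<bar> \<le> Bf del d"
proof -
  have s: "0 < sin eta" "sin eta \<le> 1" "0 \<le> cos eta" using sin_eta_bounds[OF eta] by auto
  define M where "M = real_of_int (schf_m d eta)"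
  define N where "N = real_of_int (schf_n d eta)"
  have M: "1 \<le> M" "M * d \<le> 2 * pi * cos eta + d" using schf_m_crude[OF d(1) s(3)] unfolding M_def by auto
  have N: "1 \<le> N" "N * d \<le> 4 * pi + d" using schf_n_crude[OF d(1) s(1)] schf_n_le(3)[of d eta] unfolding N_def by auto
  have P: "real_of_int (schf_m d eta * schf_n d eta) * d^2 = (M * d) * (N * d)"
    unfolding M_def N_def by (simp add: power2_eq_square algebra_simps)
  have "2 * pi * cos eta \<le> 2 * pi * del" using cd by simp
  then have M2: "M * d \<le> 2 * pi * del + d" using M(2) by linarith
  have P1: "(M * d) * (N * d) \<le> (2 * pi * del + d) * (4 * pi + d)"
  proof -
    have "0 \<le> M * d" using M(1) d by simp
    then have "0 \<le> 2 * pi * del + d" using M2 by linarith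
    then show ?thesis using M(1) N(1) d M2 N(2) by (intro mult_mono) auto
  qed
  have P0: "0 \<le> (M * d) * (N * d)" using M(1) N(1) d by simp
  have G0: "0 \<le> Gc" unfolding Gc_def by simp
  have "sin eta * cos eta \<le> 1 * cos eta" using s by (intro mult_right_mono) auto
  then have S1: "sin eta * cos eta \<le> del" using cd by simp
  have S0: "0 \<le> sin eta * cos eta" using s by simp
  have "Gc * (sin eta * cos eta) \<le> Gc * del" using G0 S1 by (intro mult_left_mono)
  moreover have "0 \<le> Gc * (sin eta * cos eta)" using G0 S0 by simp
  ultimately show ?thesis unfolding P Bf_def using P1 P0 by linarith
qed

lemma E1f_nonneg: "0 \<le> d \<Longrightarrow> 0 \<le> E1f u d" unfolding E1f_def by simp

lemma E2f_nonneg: assumes "0 \<le> d" "d \<le> 1" "u^2 \<le> 1" shows "0 \<le> E2f u d"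
proof -
  have "d^2 \<le> 1" using assms by (simp add: power_le_one)
  then have "(1 - u^2) * (1 - d^2) \<le> 1" using assms by (intro mult_le_one) auto
  then show ?thesis unfolding E2f_def using assms by simp
qed

lemma term_all:
  assumes d: "0 < d" "d \<le> 1/10" and del: "0 < del" "d / (2 * del) \<le> 1/4"
    and eta: "pi/4 \<le> eta" "eta \<le> pi/2"
  shows "\<bar>real_of_int (schf_m d eta * schf_n d eta) * d^2 - Gc * (sin eta * cos eta)\<bar> \<le> ef del d"
proof -
  define u where "u = d / (2 * del)"
  have u0: "0 \<le> u" "u \<le> 1/4" using d del unfolding u_def by auto
  have u2: "u^2 \<le> 1" using u0 by (simp add: power_le_one)
  have e1: "0 \<le> E1f u d" using d by (intro E1f_nonneg) auto
  have e2: "0 \<le> E2f u d" using d u2 by (intro E2f_nonneg) auto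
  have b0: "0 \<le> Bf del d" unfolding Bf_def Gc_def using d del by simp
  show ?thesis
  proof (cases "cos eta \<le> del")
    case True
    then show ?thesis using term_crude[OF d eta True] e1 e2 unfolding ef_def u_def[symmetric] by linarith
  next
    case False
    then have c: "0 < cos eta" using del by linarith
    have xu: "d / (2 * cos eta) \<le> u" unfolding u_def using False del d
      by (intro divide_left_mono) auto
    note tb = term_big[OF d eta c xu u0(2)]
    then show ?thesis using b0 e1 e2 unfolding ef_def u_def[symmetric] E1f_def E2f_def Gc_def by linarith
  qed
qed

lemma cos_sum:
  fixes x :: real
  shows "sin x * (1 + 2 * (\<Sum>i\<in>{1..K}. cos (2 * real i * x))) = sin ((2 * real K + 1) * x)"
proof (induction K)
  case 0 then show ?case by simp
next
  case (Suc K)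
  define A where "A = (2 * real K + 2) * x"
  have e1: "sin ((2 * real (Suc K) + 1) * x) = sin (A + x)" unfolding A_def by (simp add: algebra_simps)
  have e2: "sin ((2 * real K + 1) * x) = sin (A - x)" unfolding A_def by (simp add: algebra_simps)
  have e3: "cos (2 * real (Suc K) * x) = cos A" unfolding A_def by (simp add: algebra_simps)
  have "sin x * (1 + 2 * (\<Sum>i\<in>{1..Suc K}. cos (2 * real i * x)))
      = sin x * (1 + 2 * (\<Sum>i\<in>{1..K}. cos (2 * real i * x))) + 2 * sin x * cos (2 * real (Suc K) * x)"
    by (simp add: algebra_simps)
  also have "\<dots> = sin (A - x) + 2 * sin x * cos A" using Suc e2 e3 by simp
  also have "\<dots> = sin (A + x)" by (simp add: sin_add sin_diff)
  finally show ?case using e1 by simp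
qed

definition Del :: "real \<Rightarrow> real" where "Del d = 2 * arcsin (d / 2)"
definition Kf :: "real \<Rightarrow> nat" where "Kf d = nat (schf_t d div 2)"
definition Dl :: "real \<Rightarrow> nat \<Rightarrow> real" where
  "Dl d i = real_of_int (schf_m d (schf_eta d i) * schf_n d (schf_eta d i)) * d^2
            - Gc * (sin (schf_eta d i) * cos (schf_eta d i))"
definition Qf :: "real \<Rightarrow> real" where
  "Qf d = d * sin ((2 * real (Kf d) + 1) * Del d) / sin (Del d)"
definition Ef :: "real \<Rightarrow> real" where
  "Ef d = d * (Dl d 0 + 2 * (\<Sum>i\<in>{1..Kf d}. Dl d i))"

lemma geo:
  assumes d: "0 < d" "d \<le> 1/10"
  shows "sin (Del d) = d * sqrt (1 - d^2/4)" "0 < sin (Del d)" "d \<le> Del d" "Del d \<le> pi"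
    "cos (Del d) = 1 - d^2/2"
    "2 * real (Kf d) * Del d \<le> pi/2"
    "pi/2 - Del d \<le> (2 * real (Kf d) + 1) * Del d" "(2 * real (Kf d) + 1) * Del d \<le> pi/2 + Del d"
proof -
  define a where "a = arcsin (d/2)"
  have h: "0 \<le> d/2" "d/2 \<le> 1" using d by auto
  have sa: "sin a = d/2" unfolding a_def using h by simp
  have a1: "d/2 \<le> a" unfolding a_def using arcsin_ge[OF h] .
  have a2: "a \<le> pi/2" unfolding a_def using arcsin_ubound[of "d/2"] h by simp
  have ca: "cos a = sqrt (1 - d^2/4)" unfolding a_def using h by (simp add: cos_arcsin power_divide)
  have D: "Del d = 2 * a" unfolding Del_def a_def by simp
  show sD: "sin (Del d) = d * sqrt (1 - d^2/4)" unfolding D sin_double sa ca by simp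
  have "d^2 \<le> 1" using d by (simp add: power_le_one)
  then show "0 < sin (Del d)" unfolding sD using d by simp
  show "d \<le> Del d" "Del d \<le> pi" unfolding D using a1 a2 by auto
  show "cos (Del d) = 1 - d^2/2" unfolding D cos_double_sin sa by (simp add: power_divide)
  have ap: "0 < a" using a1 d by linarith
  define t where "t = schf_t d"
  have t: "t = \<lfloor>pi / (4 * a)\<rfloor>" unfolding t_def schf_t_def a_def by simp
  have t1: "real_of_int t \<le> pi / (4 * a)" "pi / (4 * a) < real_of_int t + 1" unfolding t by linarith+
  have t0: "0 \<le> t" unfolding t using ap by simp
  have K: "int (Kf d) = t div 2" unfolding Kf_def t_def[symmetric] using t0 by simp
  have K2: "2 * int (Kf d) \<le> t" "t \<le> 2 * int (Kf d) + 1" unfolding K by presburger+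
  then have K2r: "2 * real (Kf d) \<le> real_of_int t" "real_of_int t \<le> 2 * real (Kf d) + 1" by linarith+
  have ta: "real_of_int t * (2 * a) \<le> pi/2" using t1(1) ap by (simp add: field_simps)
  have ta2: "pi/2 < (real_of_int t + 1) * (2 * a)" using t1(2) ap by (simp add: field_simps)
  have "2 * real (Kf d) * (2 * a) \<le> real_of_int t * (2 * a)" using K2r ap by (intro mult_right_mono) auto
  then show "2 * real (Kf d) * Del d \<le> pi/2" unfolding D using ta by linarith
  have "real_of_int t * (2 * a) \<le> (2 * real (Kf d) + 1) * (2 * a)" using K2r ap by (intro mult_right_mono) auto
  then show "pi/2 - Del d \<le> (2 * real (Kf d) + 1) * Del d" unfolding D using ta2 by (simp add: algebra_simps)
  have "(2 * real (Kf d) + 1) * (2 * a) \<le> (real_of_int t + 1) * (2 * a)" using K2r ap by (intro mult_right_mono) auto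
  then show "(2 * real (Kf d) + 1) * Del d \<le> pi/2 + Del d" unfolding D using ta by (simp add: algebra_simps)
qed

lemma sincos_eta: "sin (schf_eta d i) * cos (schf_eta d i) = cos (2 * real i * Del d) / 2"
proof -
  have "2 * schf_eta d i = pi/2 + 2 * real i * Del d" unfolding schf_eta_def Del_def by (simp add: algebra_simps)
  then have "sin (2 * schf_eta d i) = cos (2 * real i * Del d)" by (simp add: sin_add)
  then show ?thesis unfolding sin_double by simp
qed

lemma decomp:
  assumes d: "0 < d" "d \<le> 1/10"
  shows "real_of_int (schf_M4 d) * d^3 = Gc / 2 * Qf d + Ef d"
proof -
  define T where "T i = real_of_int (schf_m d (schf_eta d i) * schf_n d (schf_eta d i))" for i
  define C where "C i = cos (2 * real i * Del d)" for i
  have TD: "T i * d^2 = Gc / 2 * C i + Dl d i" for i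
    unfolding T_def Dl_def C_def sincos_eta by simp
  have M: "real_of_int (schf_M4 d) = T 0 + 2 * (\<Sum>i\<in>{1..Kf d}. T i)"
    unfolding schf_M4_def T_def Kf_def by simp
  have "real_of_int (schf_M4 d) * d^3 = d * (T 0 * d^2 + 2 * (\<Sum>i\<in>{1..Kf d}. T i * d^2))"
  proof -
    have sd: "(\<Sum>i\<in>{1..Kf d}. T i) * d^2 = (\<Sum>i\<in>{1..Kf d}. T i * d^2)" by (rule sum_distrib_right)
    have "real_of_int (schf_M4 d) * d^3 = d * (T 0 * d^2 + 2 * ((\<Sum>i\<in>{1..Kf d}. T i) * d^2))"
      unfolding M by (simp add: algebra_simps power2_eq_square power3_eq_cube)
    then show ?thesis unfolding sd .
  qed
  also have "\<dots> = d * (Gc / 2 * (1 + 2 * (\<Sum>i\<in>{1..Kf d}. C i)) + (Dl d 0 + 2 * (\<Sum>i\<in>{1..Kf d}. Dl d i)))"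
    unfolding TD by (simp add: sum.distrib sum_distrib_left algebra_simps C_def)
  also have "(1 + 2 * (\<Sum>i\<in>{1..Kf d}. C i)) = sin ((2 * real (Kf d) + 1) * Del d) / sin (Del d)"
    using cos_sum[of "Del d" "Kf d"] geo(2)[OF d] unfolding C_def by (simp add: field_simps)
  finally show ?thesis unfolding Qf_def Ef_def by (simp add: algebra_simps)
qed

lemma ev_small: "eventually (\<lambda>d. 0 < d \<and> d < b) (at_right (0::real))" if "0 < b"
  unfolding eventually_at_right_field using that by (intro exI[of _ b]) auto

lemma Q_tendsto: "(Qf \<longlongrightarrow> 1) (at_right 0)"
proof (rule tendsto_sandwich)
  have ev: "eventually (\<lambda>d. 0 < d \<and> d < 1/10) (at_right (0::real))" by (rule ev_small) simp
  have bnd: "(1 - d^2/2) / sqrt (1 - d^2/4) \<le> Qf d \<and> Qf d \<le> 1 / sqrt (1 - d^2/4)"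
    if d: "0 < d" "d < 1/10" for d
  proof -
    have d': "0 < d" "d \<le> 1/10" using d by auto
    note g = geo[OF d']
    define Y where "Y = (2 * real (Kf d) + 1) * Del d"
    have "d^2 \<le> 1" using d by (simp add: power_le_one)
    then have sq: "0 < sqrt (1 - d^2/4)" by simp
    have Q: "Qf d = sin Y / sqrt (1 - d^2/4)" unfolding Qf_def Y_def g(1) using d sq by simp
    have "sin Y = cos \<bar>pi/2 - Y\<bar>" by (simp add: sin_cos_eq)
    moreover have "cos (Del d) \<le> cos \<bar>pi/2 - Y\<bar>"
      using g(3,4,7,8) d unfolding Y_def by (intro cos_monotone_0_pi_le) auto
    ultimately have "1 - d^2/2 \<le> sin Y" using g(5) by simp
    then have l: "(1 - d^2/2) / sqrt (1 - d^2/4) \<le> Qf d" unfolding Q using sq by (intro divide_right_mono) auto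
    have u: "Qf d \<le> 1 / sqrt (1 - d^2/4)" unfolding Q using sq by (intro divide_right_mono) auto
    show ?thesis using l u by simp
  qed
  show "eventually (\<lambda>d. (1 - d^2/2) / sqrt (1 - d^2/4) \<le> Qf d) (at_right 0)"
    using ev by eventually_elim (use bnd in auto)
  show "eventually (\<lambda>d. Qf d \<le> 1 / sqrt (1 - d^2/4)) (at_right 0)"
    using ev by eventually_elim (use bnd in auto)
  have "((\<lambda>d::real. (1 - d^2/2) / sqrt (1 - d^2/4)) \<longlongrightarrow> (1 - 0^2/2) / sqrt (1 - 0^2/4)) (at_right 0)"
    by (intro tendsto_intros) auto
  then show "((\<lambda>d::real. (1 - d^2/2) / sqrt (1 - d^2/4)) \<longlongrightarrow> 1) (at_right 0)" by simp
  have "((\<lambda>d::real. 1 / sqrt (1 - d^2/4)) \<longlongrightarrow> 1 / sqrt (1 - 0^2/4)) (at_right 0)"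
    by (intro tendsto_intros) auto
  then show "((\<lambda>d::real. 1 / sqrt (1 - d^2/4)) \<longlongrightarrow> 1) (at_right 0)" by simp
qed

lemma Ef_bound:
  assumes d: "0 < d" "d \<le> 1/10" and del: "0 < del" "d / (2 * del) \<le> 1/4"
  shows "\<bar>Ef d\<bar> \<le> 3 * ef del d"
proof -
  note g = geo[OF d]
  define e where "e = ef del d"
  define K where "K = Kf d"
  have Di: "\<bar>Dl d i\<bar> \<le> e" if i: "i \<le> K" for i
  proof -
    have "real i * Del d \<le> real K * Del d" using i g(3) d by (intro mult_right_mono) auto
    moreover have "0 \<le> real i * Del d" using g(3) d by simp
    ultimately have "pi/4 \<le> schf_eta d i" "schf_eta d i \<le> pi/2"
      using g(6) unfolding schf_eta_def K_def Del_def by auto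
    then show ?thesis using term_all[OF d del] unfolding Dl_def e_def by blast
  qed
  have e0: "0 \<le> e" using Di[of 0] by simp
  have "(\<Sum>i\<in>{1..K}. \<bar>Dl d i\<bar>) \<le> real (card {1..K}) * e" using Di by (intro sum_bounded_above) auto
  then have S: "(\<Sum>i\<in>{1..K}. \<bar>Dl d i\<bar>) \<le> real K * e" by simp
  have "\<bar>Dl d 0 + 2 * (\<Sum>i\<in>{1..K}. Dl d i)\<bar> \<le> \<bar>Dl d 0\<bar> + 2 * (\<Sum>i\<in>{1..K}. \<bar>Dl d i\<bar>)"
  proof -
    have "\<bar>Dl d 0 + 2 * (\<Sum>i\<in>{1..K}. Dl d i)\<bar> \<le> \<bar>Dl d 0\<bar> + \<bar>2 * (\<Sum>i\<in>{1..K}. Dl d i)\<bar>"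
      by (rule abs_triangle_ineq)
    moreover have "\<bar>2 * (\<Sum>i\<in>{1..K}. Dl d i)\<bar> = 2 * \<bar>\<Sum>i\<in>{1..K}. Dl d i\<bar>" by (simp add: abs_mult)
    moreover have "\<bar>\<Sum>i\<in>{1..K}. Dl d i\<bar> \<le> (\<Sum>i\<in>{1..K}. \<bar>Dl d i\<bar>)" by (rule sum_abs)
    ultimately show ?thesis by linarith
  qed
  also have "\<dots> \<le> e + 2 * (real K * e)" using Di[of 0] S by simp
  finally have A: "\<bar>Dl d 0 + 2 * (\<Sum>i\<in>{1..K}. Dl d i)\<bar> \<le> (1 + 2 * real K) * e" by (simp add: algebra_simps)
  have "2 * real K * d \<le> 2 * real K * Del d" using g(3) by (intro mult_left_mono) auto
  then have "2 * real K * d \<le> pi / 2" using g(6) unfolding K_def by linarith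
  then have cnt: "d * (1 + 2 * real K) \<le> 3" using d pi_less_4 by (simp add: algebra_simps)
  have "\<bar>Ef d\<bar> = d * \<bar>Dl d 0 + 2 * (\<Sum>i\<in>{1..K}. Dl d i)\<bar>" unfolding Ef_def K_def using d by (simp add: abs_mult)
  also have "\<dots> \<le> d * ((1 + 2 * real K) * e)" using A d by (intro mult_left_mono) auto
  also have "\<dots> = (d * (1 + 2 * real K)) * e" by simp
  also have "\<dots> \<le> 3 * e" using cnt e0 by (intro mult_right_mono) auto
  finally show ?thesis unfolding e_def .
qed

lemma kf0: "kf 0 = 1" unfolding kf_def by simp

lemma E_tendsto: "(Ef \<longlongrightarrow> 0) (at_right 0)"
proof (rule tendstoI)
  fix eps :: real assume eps: "0 < eps"
  have G0: "0 < Gc" unfolding Gc_def by simp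
  define del where "del = eps / (6 * (8 * pi^2 + Gc))"
  have "0 < 6 * (8 * pi^2 + Gc)" using G0 by (intro mult_pos_pos add_pos_pos) auto
  then have del0: "0 < del" unfolding del_def using eps by (intro divide_pos_pos)
  have lim: "((\<lambda>d. 3 * ef del d) \<longlongrightarrow> 3 * ef del 0) (at_right 0)"
    unfolding ef_def Bf_def E1f_def E2f_def kf_def using del0
    by (intro tendsto_intros) auto
  have ef0: "ef del 0 = del * (8 * pi^2 + Gc)" unfolding ef_def Bf_def E1f_def E2f_def
    by (simp add: algebra_simps power2_eq_square kf0)
  have P0: "0 < 8 * pi^2 + Gc" using G0 by (intro add_pos_pos) auto
  have "del * (8 * pi^2 + Gc) = eps / 6" unfolding del_def using P0 by (simp add: field_simps)
  then have "3 * ef del 0 = eps / 2" unfolding ef0 by simp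
  then have val: "3 * ef del 0 < eps" using eps by simp
  have ev1: "eventually (\<lambda>d. 3 * ef del d < eps) (at_right 0)" using order_tendstoD(2)[OF lim val] .
  have ev2: "eventually (\<lambda>d. 0 < d \<and> d < min (1/10) (del/2)) (at_right (0::real))"
    by (rule ev_small) (use del0 in simp)
  show "eventually (\<lambda>d. dist (Ef d) 0 < eps) (at_right 0)"
    using ev1 ev2
  proof eventually_elim
    case (elim d)
    then have d: "0 < d" "d \<le> 1/10" and dd: "d / (2 * del) \<le> 1/4" using del0 by (auto simp: field_simps)
    show ?case using Ef_bound[OF d del0 dd] elim by simp
  qed
qed

theorem lemma1:
  shows "((\<lambda>d. real_of_int (schf_M4 d) / sphere_area 4 * (d / 2) ^ 3)
          \<longlongrightarrow> 1 / (4 * sqrt 3)) (at_right 0)"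
proof -
  have lim: "((\<lambda>d. (Gc / 2 * Qf d + Ef d) / (16 * pi^2)) \<longlongrightarrow> (Gc / 2 * 1 + 0) / (16 * pi^2)) (at_right 0)"
    by (intro tendsto_intros Q_tendsto E_tendsto) auto
  have val: "(Gc / 2 * 1 + 0) / (16 * pi^2) = 1 / (4 * sqrt 3)" unfolding Gc_def
    by (simp add: field_simps power2_eq_square)
  have ev0: "eventually (\<lambda>d. 0 < d \<and> d < 1/10) (at_right (0::real))" by (rule ev_small) simp
  have ev: "eventually (\<lambda>d. real_of_int (schf_M4 d) / sphere_area 4 * (d / 2) ^ 3
              = (Gc / 2 * Qf d + Ef d) / (16 * pi^2)) (at_right 0)"
    using ev0
  proof eventually_elim
    case (elim d)
    then have d: "0 < d" "d \<le> 1/10" by auto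
    have "real_of_int (schf_M4 d) / sphere_area 4 * (d / 2) ^ 3 = (real_of_int (schf_M4 d) * d^3) / (16 * pi^2)"
      unfolding sphere_area_4 by (simp add: field_simps power_divide)
    then show ?case using decomp[OF d] by simp
  qed
  show ?thesis using tendsto_cong[OF ev] lim val by simp
qed

end
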